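(* Let $\mathcal{C}_1=(C_1,E_1,\lambda_1)$ and $\mathcal{C}_2=(C_2,E_2,\lambda_2)$ be concept representation classes and let $(f,h)$ be a PC reduction from $\mathcal{C}_1$ to $\mathcal{C}_2$. If, for some concept $c\in C_1$ and some $n$, every set of labeled examples that uniquely characterizes $c$ in $\mathcal{C}_1$ has size at least $n$, then every set of labeled examples that uniquely characterizes $f(c)$ in $\mathcal{C}_2$ has size at least $n$.
   Context: A concept representation class is a triple $(C,E,\lambda)$ with $C$ a set of concepts, $E$ a set of examples, and $\lambda:C\to\mathcal{P}(E)$; concepts $c,c'$ are equivalent if $\lambda(c)=\lambda(c')$. A labeled example is a pair $(e,\mathrm{lab})$ with $e\in E$, $\mathrm{lab}\in\{0,1\}$; $c$ fits it if ($e\in\lambda(c)$ iff $\mathrm{lab}=1$). A set $S$ of labeled examples uniquely characterizes $c$ if $c$ fits all of $S$ and every concept fitting all of $S$ is equivalent to $c$. A PC reduction from $\mathcal{C}_1$ to $\mathcal{C}_2$ is a pair $(f,h)$ with $f:C_1\to C_2$ and $h:E_1\to E_2$ such that (i) for all $c\in C_1$, $e\in E_1$: $e\in\lambda_1(c)$ iff $h(e)\in\lambda_2(f(c))$; and (ii) for each $e\in E_2$, either $e\in\lambda_2(f(c))$ for all $c\in C_1$, or $e\in\lambda_2(f(c))$ for no $c\in C_1$, or there is $e'\in E_1$ with $\{c\in C_1\mid e\in\lambda_2(f(c))\}=\{c\in C_1\mid e'\in\lambda_1(c)\}$. *)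

theory Defs
  imports Main
begin

definition concept_class :: "'c set \<Rightarrow> 'e set \<Rightarrow> ('c \<Rightarrow> 'e set) \<Rightarrow> bool" where
  "concept_class C E lam \<longleftrightarrow> (\<forall>c\<in>C. lam c \<subseteq> E)"

text \<open>Labeled examples are pairs (e, lab) with lab a bit; True encodes label 1.\<close>
definition fits :: "('c \<Rightarrow> 'e set) \<Rightarrow> 'c \<Rightarrow> 'e \<times> bool \<Rightarrow> bool" where
  "fits lam c ex \<longleftrightarrow> (fst ex \<in> lam c \<longleftrightarrow> snd ex)"

definition uniquely_characterizes ::
  "'c set \<Rightarrow> 'e set \<Rightarrow> ('c \<Rightarrow> 'e set) \<Rightarrow> ('e \<times> bool) set \<Rightarrow> 'c \<Rightarrow> bool" where
  "uniquely_characterizes C E lam S c \<longleftrightarrow>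
     S \<subseteq> E \<times> UNIV \<and>
     (\<forall>ex\<in>S. fits lam c ex) \<and>
     (\<forall>c'\<in>C. (\<forall>ex\<in>S. fits lam c' ex) \<longrightarrow> lam c' = lam c)"

definition pc_reduction ::
  "'c1 set \<Rightarrow> 'e1 set \<Rightarrow> ('c1 \<Rightarrow> 'e1 set) \<Rightarrow>
   'c2 set \<Rightarrow> 'e2 set \<Rightarrow> ('c2 \<Rightarrow> 'e2 set) \<Rightarrow>
   ('c1 \<Rightarrow> 'c2) \<Rightarrow> ('e1 \<Rightarrow> 'e2) \<Rightarrow> bool" where
  "pc_reduction C1 E1 lam1 C2 E2 lam2 f h \<longleftrightarrow>
     f ` C1 \<subseteq> C2 \<and> h ` E1 \<subseteq> E2 \<and>
     (\<forall>c\<in>C1. \<forall>e\<in>E1. e \<in> lam1 c \<longleftrightarrow> h e \<in> lam2 (f c)) \<and>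
     (\<forall>e\<in>E2. (\<forall>c\<in>C1. e \<in> lam2 (f c)) \<or> (\<forall>c\<in>C1. e \<notin> lam2 (f c)) \<or>
        (\<exists>e'\<in>E1. {c\<in>C1. e \<in> lam2 (f c)} = {c\<in>C1. e' \<in> lam1 c}))"

definition size_at_least :: "'a set \<Rightarrow> nat \<Rightarrow> bool" where
  "size_at_least S n \<longleftrightarrow> infinite S \<or> n \<le> card S"

end

theory Submission
  imports Defs
begin

theorem propositionA5:
  fixes C1 :: "'c1 set" and E1 :: "'e1 set" and lam1 :: "'c1 \<Rightarrow> 'e1 set"
    and C2 :: "'c2 set" and E2 :: "'e2 set" and lam2 :: "'c2 \<Rightarrow> 'e2 set"
    and f :: "'c1 \<Rightarrow> 'c2" and h :: "'e1 \<Rightarrow> 'e2" and c :: 'c1 and n :: nat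
  assumes "concept_class C1 E1 lam1"
    and "concept_class C2 E2 lam2"
    and "pc_reduction C1 E1 lam1 C2 E2 lam2 f h"
    and "c \<in> C1"
    and "\<forall>S. uniquely_characterizes C1 E1 lam1 S c \<longrightarrow> size_at_least S n"
  shows "\<forall>S. uniquely_characterizes C2 E2 lam2 S (f c) \<longrightarrow> size_at_least S n"
proof (intro allI impI)
  fix S assume U: "uniquely_characterizes C2 E2 lam2 S (f c)"
  show "size_at_least S n"
  proof (cases "finite S")
    case False thus ?thesis by (simp add: size_at_least_def)
  next
    case fin: True
    have SE: "S \<subseteq> E2 \<times> UNIV" and fitS: "\<forall>ex\<in>S. fits lam2 (f c) ex"
      and uniq: "\<forall>c'\<in>C2. (\<forall>ex\<in>S. fits lam2 c' ex) \<longrightarrow> lam2 c' = lam2 (f c)"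
      using U by (auto simp: uniquely_characterizes_def)
    have fC: "f ` C1 \<subseteq> C2" and hE: "h ` E1 \<subseteq> E2"
      and red: "\<forall>c\<in>C1. \<forall>e\<in>E1. e \<in> lam1 c \<longleftrightarrow> h e \<in> lam2 (f c)"
      and cases3: "\<forall>e\<in>E2. (\<forall>c\<in>C1. e \<in> lam2 (f c)) \<or> (\<forall>c\<in>C1. e \<notin> lam2 (f c)) \<or>
        (\<exists>e'\<in>E1. {c\<in>C1. e \<in> lam2 (f c)} = {c\<in>C1. e' \<in> lam1 c})"
      using assms(3) by (auto simp: pc_reduction_def)
    define P where "P = (\<lambda>e e'. e' \<in> E1 \<and> {c\<in>C1. e \<in> lam2 (f c)} = {c\<in>C1. e' \<in> lam1 c})"
    define T where "T = {x \<in> S. \<exists>e'. P (fst x) e'}"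
    define g where "g = (\<lambda>x::'e2 \<times> bool. (SOME e'. P (fst x) e', snd x))"
    define S' where "S' = g ` T"
    have gP: "P (fst x) (fst (g x))" if "x \<in> T" for x
      using that unfolding T_def g_def by (auto intro: someI_ex)
    have finS': "finite S'" unfolding S'_def T_def using fin by auto
    have cardS': "card S' \<le> card S" unfolding S'_def
      using card_image_le[of T g] fin card_mono[of S T] by (force simp: T_def)
    have "uniquely_characterizes C1 E1 lam1 S' c"
      unfolding uniquely_characterizes_def
    proof (intro conjI ballI impI)
      show "S' \<subseteq> E1 \<times> UNIV" unfolding S'_def using gP unfolding P_def by (metis (no_types, lifting) image_subset_iff mem_Sigma_iff prod.collapse UNIV_I)
    next
      fix ex assume "ex \<in> S'"
      then obtain x where x: "x \<in> T" "ex = g x" unfolding S'_def by auto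
      have "x \<in> S" using x T_def by auto
      then have "fits lam2 (f c) x" using fitS by auto
      moreover have "c \<in> {c\<in>C1. fst x \<in> lam2 (f c)} \<longleftrightarrow> c \<in> {c\<in>C1. fst ex \<in> lam1 c}"
        using gP[OF x(1)] x(2) unfolding P_def by simp
      ultimately show "fits lam1 c ex" using x(2) assms(4)
        by (auto simp: fits_def g_def)
    next
      fix c' assume c': "c' \<in> C1" and fit': "\<forall>ex\<in>S'. fits lam1 c' ex"
      have "\<forall>ex\<in>S. fits lam2 (f c') ex"
      proof
        fix x assume xS: "x \<in> S"
        show "fits lam2 (f c') x"
        proof (cases "x \<in> T")
          case True
          have "fits lam1 c' (g x)" using fit' True unfolding S'_def by auto
          moreover have "c' \<in> {c\<in>C1. fst x \<in> lam2 (f c)} \<longleftrightarrow> c' \<in> {c\<in>C1. fst (g x) \<in> lam1 c}"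
            using gP[OF True] unfolding P_def by simp
          ultimately show ?thesis using c' by (auto simp: fits_def g_def)
        next
          case False
          have "fst x \<in> E2" using SE xS by auto
          then have "(\<forall>c\<in>C1. fst x \<in> lam2 (f c)) \<or> (\<forall>c\<in>C1. fst x \<notin> lam2 (f c))"
            using cases3 False xS unfolding T_def P_def by blast
          then show ?thesis using fitS xS c' assms(4) by (auto simp: fits_def)
        qed
      qed
      then have L2: "lam2 (f c') = lam2 (f c)" using uniq fC c' by auto
      have "lam1 c' \<subseteq> E1" "lam1 c \<subseteq> E1" using assms(1) c' assms(4)
        by (auto simp: concept_class_def)
      then show "lam1 c' = lam1 c" using red L2 c' assms(4) by blast
    qed
    then have "size_at_least S' n" using assms(5) by auto
    then show ?thesis using finS' cardS' fin by (simp add: size_at_least_def)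
  qed
qed

end
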